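(* For every three-qubit state $\rho_{ABC}$, $$S^{\max}_{total}(\rho_{ABC})+\tau(\rho_{ABC})\le 3,$$ where $S^{\max}_{total}(\rho_{ABC})=\max\{S_{AB}+S_{AC},\,S_{AB}+S_{BC},\,S_{AC}+S_{BC}\}$.
   Context: For a two-qubit state $\rho$ let $t_{kl}=\mathrm{Tr}[\rho\,\sigma_k\otimes\sigma_l]$ ($\sigma_k$ Pauli matrices) and $S(\rho)=\sum_{k,l=1}^3 t_{kl}^2$; $S_{ij}=S(\rho_{ij})$ for the two-qubit reduced states $\rho_{ij}$ of $\rho_{ABC}$. $\tau$ is the three-tangle: for a pure state, $\tau=1-|\vec a|^2-\mathcal C_{AB}^2-\mathcal C_{AC}^2$, where $\vec a$ with $a_k=\mathrm{Tr}[\rho_A\sigma_k]$ is the Bloch vector of qubit $A$ and $\mathcal C_{ij}$ is the Wootters concurrence of $\rho_{ij}$ ($\mathcal C(\rho)=\max\{0,\lambda_1-\lambda_2-\lambda_3-\lambda_4\}$, $\lambda_i$ the decreasingly ordered square roots of the eigenvalues of $\rho(\sigma_2\otimes\sigma_2)\rho^*(\sigma_2\otimes\sigma_2)$); for a mixed state $\tau$ is the convex roof, i.e. the minimum of $\sum_n p_n\tau(\psi_n)$ over pure-state decompositions $\rho=\sum_n p_n|\psi_n\rangle\langle\psi_n|$. *)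

theory Defs
  imports "Jordan_Normal_Form.Char_Poly" "HOL-Library.Multiset"
begin

definition pauli :: "nat \<Rightarrow> complex mat" where
  "pauli k = (if k = 1 then mat_of_rows_list 2 [[0, 1], [1, 0]]
              else if k = 2 then mat_of_rows_list 2 [[0, - \<i>], [\<i>, 0]]
              else if k = 3 then mat_of_rows_list 2 [[1, 0], [0, -1]]
              else 1\<^sub>m 2)"

(* tensor product of two 2x2 matrices; basis index of |a b> is 2a+b *)
definition kron2 :: "complex mat \<Rightarrow> complex mat \<Rightarrow> complex mat" where
  "kron2 A B = mat 4 4 (\<lambda>(i, j). A $$ (i div 2, j div 2) * B $$ (i mod 2, j mod 2))"

definition mtrace :: "complex mat \<Rightarrow> complex" where
  "mtrace A = (\<Sum>i<dim_row A. A $$ (i, i))"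

definition density_op :: "nat \<Rightarrow> complex mat \<Rightarrow> bool" where
  "density_op n \<rho> \<longleftrightarrow> \<rho> \<in> carrier_mat n n
     \<and> (\<forall>i<n. \<forall>j<n. \<rho> $$ (i, j) = cnj (\<rho> $$ (j, i)))
     \<and> (\<forall>v \<in> carrier_vec n. 0 \<le> Re (\<Sum>i<n. \<Sum>j<n. cnj (v $ i) * \<rho> $$ (i, j) * v $ j))
     \<and> mtrace \<rho> = 1"

(* three-qubit basis index of |a b c> is 4a+2b+c; reduced states *)
definition rho_AB :: "complex mat \<Rightarrow> complex mat" where
  "rho_AB \<rho> = mat 4 4 (\<lambda>(i, j). \<Sum>c<2. \<rho> $$ (2*i + c, 2*j + c))"

definition rho_AC :: "complex mat \<Rightarrow> complex mat" where
  "rho_AC \<rho> = mat 4 4 (\<lambda>(i, j). \<Sum>b<2.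
      \<rho> $$ (4*(i div 2) + 2*b + i mod 2, 4*(j div 2) + 2*b + j mod 2))"

definition rho_BC :: "complex mat \<Rightarrow> complex mat" where
  "rho_BC \<rho> = mat 4 4 (\<lambda>(i, j). \<Sum>a<2. \<rho> $$ (4*a + i, 4*a + j))"

definition rho_A :: "complex mat \<Rightarrow> complex mat" where
  "rho_A \<rho> = mat 2 2 (\<lambda>(i, j). \<Sum>b<2. \<Sum>c<2. \<rho> $$ (4*i + 2*b + c, 4*j + 2*b + c))"

(* t_kl = Tr[rho sigma_k (x) sigma_l] (real for Hermitian rho) *)
definition corr :: "complex mat \<Rightarrow> nat \<Rightarrow> nat \<Rightarrow> real" where
  "corr \<rho> k l = Re (mtrace (\<rho> * kron2 (pauli k) (pauli l)))"

definition Scorr :: "complex mat \<Rightarrow> real" where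
  "Scorr \<rho> = (\<Sum>k\<in>{1..3}. \<Sum>l\<in>{1..3}. (corr \<rho> k l)\<^sup>2)"

definition S_max_total :: "complex mat \<Rightarrow> real" where
  "S_max_total \<rho> = Max {Scorr (rho_AB \<rho>) + Scorr (rho_AC \<rho>),
                         Scorr (rho_AB \<rho>) + Scorr (rho_BC \<rho>),
                         Scorr (rho_AC \<rho>) + Scorr (rho_BC \<rho>)}"

definition concurrence :: "complex mat \<Rightarrow> real" where
  "concurrence \<rho> =
     (let Y = kron2 (pauli 2) (pauli 2);
          R = \<rho> * Y * map_mat cnj \<rho> * Y;
          ls = rev (sorted_list_of_multiset (image_mset (\<lambda>z. sqrt (Re z)) (proots (char_poly R))))
      in max 0 (ls ! 0 - ls ! 1 - ls ! 2 - ls ! 3))"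

definition bloch_A :: "complex mat \<Rightarrow> nat \<Rightarrow> real" where
  "bloch_A \<rho> k = Re (mtrace (rho_A \<rho> * pauli k))"

definition unit_vec8 :: "complex vec \<Rightarrow> bool" where
  "unit_vec8 \<psi> \<longleftrightarrow> \<psi> \<in> carrier_vec 8 \<and> (\<Sum>i<8. (cmod (\<psi> $ i))\<^sup>2) = 1"

definition proj :: "complex vec \<Rightarrow> complex mat" where
  "proj \<psi> = mat 8 8 (\<lambda>(i, j). \<psi> $ i * cnj (\<psi> $ j))"

definition tangle_pure :: "complex vec \<Rightarrow> real" where
  "tangle_pure \<psi> = 1 - (\<Sum>k\<in>{1..3}. (bloch_A (proj \<psi>) k)\<^sup>2)
       - (concurrence (rho_AB (proj \<psi>)))\<^sup>2 - (concurrence (rho_AC (proj \<psi>)))\<^sup>2"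

definition pure_decomp :: "complex mat \<Rightarrow> (real \<times> complex vec) list \<Rightarrow> bool" where
  "pure_decomp \<rho> d \<longleftrightarrow>
     (\<forall>x \<in> set d. 0 \<le> fst x \<and> unit_vec8 (snd x))
     \<and> (\<Sum>n<length d. fst (d ! n)) = 1
     \<and> (\<forall>i<8. \<forall>j<8. \<rho> $$ (i, j) = (\<Sum>n<length d. of_real (fst (d ! n)) * proj (snd (d ! n)) $$ (i, j)))"

(* three-tangle of a mixed state: convex roof (infimum = minimum over decompositions) *)
definition tangle :: "complex mat \<Rightarrow> real" where
  "tangle \<rho> = Inf {(\<Sum>n<length d. fst (d ! n) * tangle_pure (snd (d ! n))) | d. pure_decomp \<rho> d}"

end

theory Submission
  imports Defs
begin

lemma det1: "det (mat (Suc 0) (Suc 0) f) = f (0,0)"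
  unfolding det_def by (auto simp: sign_def)

lemma det2s: "det (mat (Suc (Suc 0)) (Suc (Suc 0)) f) = f(0,0)*f(Suc 0,Suc 0) - f(0,Suc 0)*f(Suc 0,0)"
proof -
  have c: "mat (Suc (Suc 0)) (Suc (Suc 0)) f \<in> carrier_mat (Suc (Suc 0)) (Suc (Suc 0))" by simp
  show ?thesis
    unfolding laplace_expansion_column[OF c, of 0, simplified]
    by (simp add: cofactor_def det1 mat_delete_def)
qed

lemma det3s: "det (mat (Suc (Suc (Suc 0))) (Suc (Suc (Suc 0))) f) = f(0,0)*(f(1,1)*f(2,2) - f(1,2)*f(2,1))
     - f(1,0)*(f(0,1)*f(2,2) - f(0,2)*f(2,1))
     + f(2,0)*(f(0,1)*f(1,2) - f(0,2)*f(1,1))"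
proof -
  have c: "mat (Suc (Suc (Suc 0))) (Suc (Suc (Suc 0))) f \<in> carrier_mat (Suc (Suc (Suc 0))) (Suc (Suc (Suc 0)))" by simp
  show ?thesis
    unfolding laplace_expansion_column[OF c, of 0, simplified]
    apply (simp add: cofactor_def det2s mat_delete_def eval_nat_numeral insert_index_def)
    by (simp add: algebra_simps)
qed

lemma det4: "det (mat 4 4 f) = 
       f(0,0)*(f(1,1)*(f(2,2)*f(3,3) - f(2,3)*f(3,2)) - f(2,1)*(f(1,2)*f(3,3) - f(1,3)*f(3,2)) + f(3,1)*(f(1,2)*f(2,3) - f(1,3)*f(2,2)))
     - f(1,0)*(f(0,1)*(f(2,2)*f(3,3) - f(2,3)*f(3,2)) - f(2,1)*(f(0,2)*f(3,3) - f(0,3)*f(3,2)) + f(3,1)*(f(0,2)*f(2,3) - f(0,3)*f(2,2)))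
     + f(2,0)*(f(0,1)*(f(1,2)*f(3,3) - f(1,3)*f(3,2)) - f(1,1)*(f(0,2)*f(3,3) - f(0,3)*f(3,2)) + f(3,1)*(f(0,2)*f(1,3) - f(0,3)*f(1,2)))
     - f(3,0)*(f(0,1)*(f(1,2)*f(2,3) - f(1,3)*f(2,2)) - f(1,1)*(f(0,2)*f(2,3) - f(0,3)*f(2,2)) + f(2,1)*(f(0,2)*f(1,3) - f(0,3)*f(1,2)))"
proof -
  have c: "mat 4 4 f \<in> carrier_mat 4 4" by simp
  show ?thesis
    unfolding laplace_expansion_column[OF c, of 0, simplified]
    apply (simp add: cofactor_def det3s mat_delete_def eval_nat_numeral insert_index_def)
    by (simp add: algebra_simps)
qed

lemma det4_poly_id:
  fixes a b :: "nat \<Rightarrow> nat \<Rightarrow> complex" and x :: complex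
  defines "f \<equiv> (\<lambda>(i,j). (if i = j then x else 0) - (a i 0 * b 0 j + a i 1 * b 1 j))"
  shows "det (mat 4 4 f) = x^4 - (\<Sum>i<4. b 0 i * a i 0 + b 1 i * a i 1) * x^3
      + ((\<Sum>i<4. b 0 i * a i 0) * (\<Sum>i<4. b 1 i * a i 1) - (\<Sum>i<4. b 0 i * a i 1) * (\<Sum>i<4. b 1 i * a i 0)) * x^2"
  unfolding det4 f_def
  apply (simp add: eval_nat_numeral)
  apply (simp add: algebra_simps)
  done

lemma charpoly_factor:
  fixes p s :: real
  assumes "0 \<le> p" "4*p \<le> s^2" "0 \<le> s"
  defines "mp \<equiv> (s + sqrt (s^2 - 4*p))/2" and "mm \<equiv> (s - sqrt (s^2 - 4*p))/2"
  shows "[:0,0,complex_of_real p,-complex_of_real s,1:] = [:0,1:]*[:0,1:]*[:-complex_of_real mp,1:]*[:-complex_of_real mm,1:]"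
    and "mp * mm = p" "mp + mm = s" "0 \<le> mm" "mm \<le> mp"
proof -
  define r where "r = sqrt (s^2 - 4*p)"
  have q: "r^2 = s^2 - 4*p" using assms(2) unfolding r_def by simp
  have "sqrt (s^2-4*p) \<le> sqrt (s^2)" by (rule real_sqrt_le_mono) (use assms in simp)
  then have le: "r \<le> s" using assms(3) unfolding r_def by simp
  have r0: "0 \<le> r" unfolding r_def using assms(2) by simp
  have mp': "mp = (s + r)/2" "mm = (s - r)/2" unfolding mp_def mm_def r_def by auto
  have "(s+r)*(s-r) = s^2 - r^2" by (simp add: algebra_simps power2_eq_square)
  then show mp: "mp * mm = p" unfolding mp' using q by simp
  show "mp + mm = s" unfolding mp' by argo
  show "0 \<le> mm" unfolding mp' using le by argo
  show "mm \<le> mp" unfolding mp' using r0 by argo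
  have e1: "complex_of_real mp * complex_of_real mm = complex_of_real p" using mp by (metis of_real_mult)
  have e2: "complex_of_real mp + complex_of_real mm = complex_of_real s" using \<open>mp + mm = s\<close> by (metis of_real_add)
  show "[:0,0,complex_of_real p,-complex_of_real s,1:] = [:0,1:]*[:0,1:]*[:-complex_of_real mp,1:]*[:-complex_of_real mm,1:]"
    unfolding poly_eq_poly_eq_iff[symmetric]
  proof
    fix x :: complex
    show "poly [:0,0,complex_of_real p,-complex_of_real s,1:] x = poly ([:0,1:]*[:0,1:]*[:-complex_of_real mp,1:]*[:-complex_of_real mm,1:]) x"
      unfolding e1[symmetric] e2[symmetric] by (simp add: algebra_simps)
  qed
qed

definition Ymat :: "complex mat" where "Ymat = kron2 (pauli 2) (pauli 2)"

lemma conc_eq: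
  fixes p s :: real
  assumes cp: "char_poly (\<rho> * Ymat * map_mat cnj \<rho> * Ymat) = [:0,0,complex_of_real p,-complex_of_real s,1:]"
    and "0 \<le> p" "4*p \<le> s^2" "0 \<le> s"
  shows "(concurrence \<rho>)^2 = s - 2 * sqrt p"
proof -
  define mp where "mp = (s + sqrt (s^2 - 4*p))/2"
  define mm where "mm = (s - sqrt (s^2 - 4*p))/2"
  note F = charpoly_factor[OF assms(2-4), folded mp_def mm_def]
  have pr: "proots (char_poly (\<rho> * Ymat * map_mat cnj \<rho> * Ymat)) = {#0, 0, complex_of_real mp, complex_of_real mm#}"
    unfolding cp F(1) by (subst proots_mult, simp, simp)+
  have ms: "image_mset (\<lambda>z. sqrt (Re z)) {#0, 0, complex_of_real mp, complex_of_real mm#} = mset [0, 0, sqrt mm, sqrt mp]"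
    by (simp add: add_mset_commute)
  have so: "sorted [0, 0, sqrt mm, sqrt mp]" using F(4,5) by simp
  have L: "rev (sorted_list_of_multiset (image_mset (\<lambda>z. sqrt (Re z)) (proots (char_poly (\<rho> * Ymat * map_mat cnj \<rho> * Ymat)))))
     = [sqrt mp, sqrt mm, 0, 0]"
    unfolding pr ms sorted_list_of_multiset_mset sorted_sort_id[OF so] by simp
  have c: "concurrence \<rho> = sqrt mp - sqrt mm"
    unfolding concurrence_def Let_def Ymat_def[symmetric] L using F(4,5) by simp
  have "(sqrt mp - sqrt mm)^2 = mp + mm - 2 * sqrt (mp * mm)"
    using F(4,5) by (simp add: power2_diff real_sqrt_mult)
  then show ?thesis unfolding c F(2,3) .
qed

definition ys :: "nat \<Rightarrow> complex" where "ys i = (if i = 0 \<or> i = 3 then -1 else 1)"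

lemma less4_cases: "(i::nat) < 4 \<Longrightarrow> i = 0 \<or> i = 1 \<or> i = 2 \<or> i = 3" by auto

lemma Ymat_entry: assumes "i < 4" "j < 4"
  shows "Ymat $$ (i,j) = (if i + j = 3 then ys i else 0)"
  using less4_cases[OF assms(1)] less4_cases[OF assms(2)]
  by (auto simp: Ymat_def kron2_def pauli_def ys_def mat_of_rows_list_def)

lemma Ymat_carrier[simp]: "Ymat \<in> carrier_mat 4 4" by (simp add: Ymat_def kron2_def)
lemma Ymat_dim[simp]: "dim_row Ymat = 4" "dim_col Ymat = 4" by (simp_all add: Ymat_def kron2_def)

lemma T_entry:
  fixes u v :: "nat \<Rightarrow> complex"
  defines "\<rho> \<equiv> mat 4 4 (\<lambda>(i,j). u i * cnj (u j) + v i * cnj (v j))"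
  assumes "k < 4" "j < 4"
  shows "(Ymat * map_mat cnj \<rho> * Ymat) $$ (k,j) = ys k * ys j * (cnj (u (3-k)) * u (3-j) + cnj (v (3-k)) * v (3-j))"
  using less4_cases[OF assms(2)] less4_cases[OF assms(3)]
  by (auto simp: \<rho>_def Ymat_entry scalar_prod_def eval_nat_numeral ys_def)

definition mY :: "(nat \<Rightarrow> complex) \<Rightarrow> (nat \<Rightarrow> complex) \<Rightarrow> complex" where
  "mY u v = - u 0 * v 3 + u 1 * v 2 + u 2 * v 1 - u 3 * v 0"

lemma char_poly_rank2:
  fixes a b :: "nat \<Rightarrow> nat \<Rightarrow> complex"
  shows "char_poly (mat 4 4 (\<lambda>(i,j). a i 0 * b 0 j + a i 1 * b 1 j)) =
    [:0, 0, (\<Sum>i<4. b 0 i * a i 0) * (\<Sum>i<4. b 1 i * a i 1) - (\<Sum>i<4. b 0 i * a i 1) * (\<Sum>i<4. b 1 i * a i 0),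
        - (\<Sum>i<4. b 0 i * a i 0 + b 1 i * a i 1), 1:]"
  (is "char_poly ?R = ?q")
proof -
  have c: "?R \<in> carrier_mat 4 4" by simp
  show ?thesis unfolding poly_eq_poly_eq_iff[symmetric]
  proof
    fix x
    have e: "- char_matrix ?R x = mat 4 4 (\<lambda>(i,j). (if i = j then x else 0) - (a i 0 * b 0 j + a i 1 * b 1 j))"
      by (rule eq_matI) (auto simp: char_matrix_def)
    show "poly (char_poly ?R) x = poly ?q x"
      unfolding char_poly_matrix[OF c] e det4_poly_id
      by (simp add: algebra_simps power2_eq_square power3_eq_cube power4_eq_xxxx)
  qed
qed

lemma bilin:
  fixes u v w w' :: "nat \<Rightarrow> complex"
  shows "(\<Sum>i<4. (\<Sum>l<4. cnj (w l) * (ys l * ys i * (cnj (u (3-l)) * u (3-i) + cnj (v (3-l)) * v (3-i)))) * w' i)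
     = cnj (mY w u) * mY u w' + cnj (mY w v) * mY v w'"
  by (simp add: eval_nat_numeral ys_def mY_def algebra_simps)

lemma mY_sym: "mY u v = mY v u" by (simp add: mY_def algebra_simps)

lemma conc_rank2:
  fixes u v :: "nat \<Rightarrow> complex"
  defines "\<rho> \<equiv> mat 4 4 (\<lambda>(i,j). u i * cnj (u j) + v i * cnj (v j))"
  shows "(concurrence \<rho>)^2 = (cmod (mY u u))^2 + 2*(cmod (mY u v))^2 + (cmod (mY v v))^2
           - 2 * cmod (mY u u * mY v v - (mY u v)^2)"
proof -
  define T where "T = Ymat * map_mat cnj \<rho> * Ymat"
  define a where "a = (\<lambda>i k. if k = (0::nat) then u i else v i)"
  define b where "b = (\<lambda>k j. \<Sum>l<4. cnj (a l k) * T $$ (l,j))"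
  have rc: "\<rho> \<in> carrier_mat 4 4" unfolding \<rho>_def by simp
  have Tc: "T \<in> carrier_mat 4 4" unfolding T_def using rc by (meson mult_carrier_mat map_carrier_mat Ymat_carrier)
  have R1: "\<rho> * Ymat * map_mat cnj \<rho> * Ymat = \<rho> * T"
  proof -
    have rcc: "map_mat cnj \<rho> \<in> carrier_mat 4 4" using rc by simp
    have "\<rho> * Ymat * map_mat cnj \<rho> = \<rho> * (Ymat * map_mat cnj \<rho>)"
      by (rule assoc_mult_mat[OF rc Ymat_carrier rcc])
    moreover have "\<rho> * (Ymat * map_mat cnj \<rho>) * Ymat = \<rho> * (Ymat * map_mat cnj \<rho> * Ymat)"
      by (rule assoc_mult_mat[OF rc _ Ymat_carrier]) (use rcc in auto)
    ultimately show ?thesis unfolding T_def by simp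
  qed
  have R2: "\<rho> * T = mat 4 4 (\<lambda>(i,j). a i 0 * b 0 j + a i 1 * b 1 j)"
  proof (rule eq_matI)
    fix i j assume ij: "i < dim_row (mat 4 4 (\<lambda>(i,j). a i 0 * b 0 j + a i 1 * b 1 j))"
       "j < dim_col (mat 4 4 (\<lambda>(i,j). a i 0 * b 0 j + a i 1 * b 1 j))"
    then have "(\<rho> * T) $$ (i,j) = (\<Sum>l<4. (u i * cnj (u l) + v i * cnj (v l)) * T $$ (l,j))"
      using Tc by (simp add: \<rho>_def scalar_prod_def lessThan_atLeast0)
    also have "\<dots> = a i 0 * b 0 j + a i 1 * b 1 j"
      unfolding a_def b_def by (simp add: sum_distrib_left sum.distrib algebra_simps)
    finally show "(\<rho> * T) $$ (i,j) = mat 4 4 (\<lambda>(i,j). a i 0 * b 0 j + a i 1 * b 1 j) $$ (i,j)"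
      using ij by simp
  qed (use Tc rc in auto)
  have Te: "T $$ (k,j) = ys k * ys j * (cnj (u (3-k)) * u (3-j) + cnj (v (3-k)) * v (3-j))" if "k < 4" "j < 4" for k j
    unfolding T_def \<rho>_def by (rule T_entry[OF that])
  have P: "(\<Sum>i<4. b k i * a i l) = cnj (mY (\<lambda>i. a i k) u) * mY u (\<lambda>i. a i l) + cnj (mY (\<lambda>i. a i k) v) * mY v (\<lambda>i. a i l)" for k l
  proof -
    have "(\<Sum>i<4. b k i * a i l) = (\<Sum>i<4. (\<Sum>l'<4. cnj (a l' k) * (ys l' * ys i * (cnj (u (3-l')) * u (3-i) + cnj (v (3-l')) * v (3-i)))) * a i l)"
      unfolding b_def by (intro sum.cong refl) (simp add: Te)
    then show ?thesis using bilin[of "\<lambda>i. a i k" u v "\<lambda>i. a i l"] by simp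
  qed
  have a0: "(\<lambda>i. a i 0) = u" and a1: "(\<lambda>i. a i 1) = v" unfolding a_def by auto
  define A where "A = mY u u" 
  define B where "B = mY u v"
  define C where "C = mY v v"
  have vu: "mY v u = B" unfolding B_def by (rule mY_sym)
  define s where "s = (cmod A)^2 + 2*(cmod B)^2 + (cmod C)^2"
  define p where "p = (cmod (A * C - B^2))^2"
  have cp: "char_poly (\<rho> * Ymat * map_mat cnj \<rho> * Ymat) = [:0,0,complex_of_real p,-complex_of_real s,1:]"
  proof -
    have "char_poly (\<rho> * Ymat * map_mat cnj \<rho> * Ymat) = 
      [:0, 0, (\<Sum>i<4. b 0 i * a i 0) * (\<Sum>i<4. b 1 i * a i 1) - (\<Sum>i<4. b 0 i * a i 1) * (\<Sum>i<4. b 1 i * a i 0),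
        - ((\<Sum>i<4. b 0 i * a i 0) + (\<Sum>i<4. b 1 i * a i 1)), 1:]"
      unfolding R1 R2 char_poly_rank2 sum.distrib ..
    also have "\<dots> = [:0, 0, (cnj A * A + cnj B * B) * (cnj B * B + cnj C * C) - (cnj A * B + cnj B * C) * (cnj B * A + cnj C * B),
        - ((cnj A * A + cnj B * B) + (cnj B * B + cnj C * C)), 1:]"
      unfolding P a0 a1 vu A_def[symmetric] B_def[symmetric] C_def[symmetric] ..
    also have "\<dots> = [:0,0,complex_of_real p,-complex_of_real s,1:]"
      unfolding p_def s_def of_real_add of_real_mult complex_norm_square
      by (simp add: algebra_simps power2_eq_square)
    finally show ?thesis .
  qed
  have sq: "2 * cmod (A * C - B^2) \<le> s"
  proof -
    have "cmod (A * C - B^2) \<le> cmod A * cmod C + (cmod B)^2"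
      by (metis norm_mult norm_power norm_triangle_ineq4)
    moreover have "2 * (cmod A * cmod C) \<le> (cmod A)^2 + (cmod C)^2"
      by (metis add.commute mult.assoc sum_squares_bound)
    ultimately show ?thesis unfolding s_def by argo
  qed
  have p0: "0 \<le> p" unfolding p_def by simp
  have s0: "0 \<le> s" unfolding s_def by simp
  have p4: "4*p \<le> s^2"
  proof -
    have "(2 * cmod (A * C - B^2))^2 \<le> s^2" by (rule power_mono[OF sq]) simp
    then show ?thesis unfolding p_def by (simp add: power_mult_distrib)
  qed
  have "(concurrence \<rho>)^2 = s - 2 * sqrt p" by (rule conc_eq[OF cp p0 p4 s0])
  moreover have "sqrt p = cmod (A * C - B^2)" unfolding p_def by simp
  ultimately show ?thesis unfolding s_def A_def B_def C_def by simp
qed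

lemma pauli_entries:
  "pauli 0 $$ (0,0) = 1" "pauli 0 $$ (0,1) = 0" "pauli 0 $$ (1,0) = 0" "pauli 0 $$ (1,1) = 1"
  "pauli 1 $$ (0,0) = 0" "pauli 1 $$ (0,1) = 1" "pauli 1 $$ (1,0) = 1" "pauli 1 $$ (1,1) = 0"
  "pauli 2 $$ (0,0) = 0" "pauli 2 $$ (0,1) = -\<i>" "pauli 2 $$ (1,0) = \<i>" "pauli 2 $$ (1,1) = 0"
  "pauli 3 $$ (0,0) = 1" "pauli 3 $$ (0,1) = 0" "pauli 3 $$ (1,0) = 0" "pauli 3 $$ (1,1) = -1"
  by (simp_all add: pauli_def mat_of_rows_list_def)

lemmas pauli_entries' = pauli_entries[unfolded One_nat_def]

lemma sum4: "(\<Sum>k<4. g k) = g 0 + g 1 + g 2 + g (3::nat)"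
  by (simp add: eval_nat_numeral)

lemma mtrace_kron:
  assumes "r \<in> carrier_mat 4 4"
  shows "mtrace (r * kron2 A B) = r $$ (0,0) * (A $$ (0,0) * B $$ (0,0)) + r $$ (0,1) * (A $$ (0,0) * B $$ (1,0)) + r $$ (0,2) * (A $$ (1,0) * B $$ (0,0)) + r $$ (0,3) * (A $$ (1,0) * B $$ (1,0)) + r $$ (1,0) * (A $$ (0,0) * B $$ (0,1)) + r $$ (1,1) * (A $$ (0,0) * B $$ (1,1)) + r $$ (1,2) * (A $$ (1,0) * B $$ (0,1)) + r $$ (1,3) * (A $$ (1,0) * B $$ (1,1)) + r $$ (2,0) * (A $$ (0,1) * B $$ (0,0)) + r $$ (2,1) * (A $$ (0,1) * B $$ (1,0)) + r $$ (2,2) * (A $$ (1,1) * B $$ (0,0)) + r $$ (2,3) * (A $$ (1,1) * B $$ (1,0)) + r $$ (3,0) * (A $$ (0,1) * B $$ (0,1)) + r $$ (3,1) * (A $$ (0,1) * B $$ (1,1)) + r $$ (3,2) * (A $$ (1,1) * B $$ (0,1)) + r $$ (3,3) * (A $$ (1,1) * B $$ (1,1))"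
  using assms by (simp add: mtrace_def kron2_def scalar_prod_def lessThan_atLeast0[symmetric] sum4 algebra_simps)

lemma G4:
  fixes f :: "nat \<Rightarrow> nat \<Rightarrow> complex"
  assumes h: "\<And>i j. i < 4 \<Longrightarrow> j < 4 \<Longrightarrow> f i j = cnj (f j i)"
  defines "r \<equiv> mat 4 4 (\<lambda>(i,j). f i j)"
  shows "(\<Sum>k<4. \<Sum>l<4. (Re (mtrace (r * kron2 (pauli k) (pauli l))))^2) = 4 * (\<Sum>i<4. \<Sum>j<4. (cmod (f i j))^2)"
proof -
  have h1: "f 1 0 = cnj (f 0 1)" "f 2 0 = cnj (f 0 2)" "f 3 0 = cnj (f 0 3)"
     "f 2 1 = cnj (f 1 2)" "f 3 1 = cnj (f 1 3)" "f 3 2 = cnj (f 2 3)"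
    using h[of 1 0] h[of 2 0] h[of 3 0] h[of 2 1] h[of 3 1] h[of 3 2] by simp_all
  have h2: "Im (f 0 0) = 0" "Im (f 1 1) = 0" "Im (f 2 2) = 0" "Im (f 3 3) = 0"
    using h[of 0 0] h[of 1 1] h[of 2 2] h[of 3 3] by (simp_all add: complex_eq_iff)
  show ?thesis
    unfolding r_def
    apply (simp add: mtrace_kron sum4 pauli_entries pauli_entries' h1 h2 h1[unfolded One_nat_def] h2[unfolded One_nat_def] cmod_power2 algebra_simps)
    by (simp add: power2_eq_square algebra_simps)
qed

definition uAB :: "(nat \<Rightarrow> complex) \<Rightarrow> nat \<Rightarrow> complex" where "uAB x i = x (2*i)"
definition vAB :: "(nat \<Rightarrow> complex) \<Rightarrow> nat \<Rightarrow> complex" where "vAB x i = x (2*i+1)"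
definition uAC :: "(nat \<Rightarrow> complex) \<Rightarrow> nat \<Rightarrow> complex" where "uAC x i = x (4*(i div 2) + i mod 2)"
definition vAC :: "(nat \<Rightarrow> complex) \<Rightarrow> nat \<Rightarrow> complex" where "vAC x i = x (4*(i div 2) + 2 + i mod 2)"
definition uBC :: "(nat \<Rightarrow> complex) \<Rightarrow> nat \<Rightarrow> complex" where "uBC x i = x i"
definition vBC :: "(nat \<Rightarrow> complex) \<Rightarrow> nat \<Rightarrow> complex" where "vBC x i = x (4+i)"

definition rA :: "(nat \<Rightarrow> complex) \<Rightarrow> complex mat" where
  "rA x = mat 2 2 (\<lambda>(i,j). \<Sum>b<2. \<Sum>c<2. x (4*i+2*b+c) * cnj (x (4*j+2*b+c)))"
definition rB :: "(nat \<Rightarrow> complex) \<Rightarrow> complex mat" where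
  "rB x = mat 2 2 (\<lambda>(i,j). \<Sum>a<2. \<Sum>c<2. x (4*a+2*i+c) * cnj (x (4*a+2*j+c)))"
definition rC :: "(nat \<Rightarrow> complex) \<Rightarrow> complex mat" where
  "rC x = mat 2 2 (\<lambda>(i,j). \<Sum>a<2. \<Sum>b<2. x (4*a+2*b+i) * cnj (x (4*a+2*b+j)))"
definition r2 :: "(nat \<Rightarrow> complex) \<Rightarrow> (nat \<Rightarrow> complex) \<Rightarrow> complex mat" where
  "r2 u v = mat 4 4 (\<lambda>(i,j). u i * cnj (u j) + v i * cnj (v j))"

definition P2 :: "complex mat \<Rightarrow> real" where "P2 r = (\<Sum>i<2. \<Sum>j<2. (cmod (r $$ (i,j)))^2)"
definition P4 :: "complex mat \<Rightarrow> real" where "P4 r = (\<Sum>i<4. \<Sum>j<4. (cmod (r $$ (i,j)))^2)"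
definition sY :: "(nat \<Rightarrow> complex) \<Rightarrow> (nat \<Rightarrow> complex) \<Rightarrow> real" where
  "sY u v = (cmod (mY u u))^2 + 2*(cmod (mY u v))^2 + (cmod (mY v v))^2"
definition DY :: "(nat \<Rightarrow> complex) \<Rightarrow> (nat \<Rightarrow> complex) \<Rightarrow> complex" where
  "DY u v = mY u u * mY v v - (mY u v)^2"
definition NN :: "(nat \<Rightarrow> complex) \<Rightarrow> real" where "NN x = (\<Sum>i<8. (cmod (x i))^2)"

lemma uAB_ev: "uAB x 0 = x 0" "uAB x 1 = x 2" "uAB x 2 = x 4" "uAB x 3 = x 6"
  by (simp_all add: uAB_def del: One_nat_def add_2_eq_Suc add_2_eq_Suc')
lemma vAB_ev: "vAB x 0 = x 1" "vAB x 1 = x 3" "vAB x 2 = x 5" "vAB x 3 = x 7"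
  by (simp_all add: vAB_def del: One_nat_def add_2_eq_Suc add_2_eq_Suc')
lemma uAC_ev: "uAC x 0 = x 0" "uAC x 1 = x 1" "uAC x 2 = x 4" "uAC x 3 = x 5"
  by (simp_all add: uAC_def del: One_nat_def add_2_eq_Suc add_2_eq_Suc')
lemma vAC_ev: "vAC x 0 = x 2" "vAC x 1 = x 3" "vAC x 2 = x 6" "vAC x 3 = x 7"
  by (simp_all add: vAC_def del: One_nat_def add_2_eq_Suc add_2_eq_Suc')
lemma uBC_ev: "uBC x 0 = x 0" "uBC x 1 = x 1" "uBC x 2 = x 2" "uBC x 3 = x 3"
  by (simp_all add: uBC_def del: One_nat_def add_2_eq_Suc add_2_eq_Suc')
lemma vBC_ev: "vBC x 0 = x 4" "vBC x 1 = x 5" "vBC x 2 = x 6" "vBC x 3 = x 7"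
  by (simp_all add: vBC_def del: One_nat_def add_2_eq_Suc add_2_eq_Suc')

lemma sum2: "(\<Sum>k<2. g k) = g 0 + g (1::nat)"
  by (simp add: eval_nat_numeral)
lemma sum8: "(\<Sum>k<8. g k) = g 0 + g 1 + g 2 + g 3 + g 4 + g 5 + g 6 + g (7::nat)"
  by (simp add: eval_nat_numeral)

lemma ofreal_cmod2: "complex_of_real ((cmod z)^2) = z * cnj z" by (rule complex_norm_square)

lemma E1a: "P4 (r2 (uAB x) (vAB x)) = P2 (rC x)"
proof -
  have "complex_of_real (P4 (r2 (uAB x) (vAB x))) = complex_of_real (P2 (rC x))"
    unfolding P4_def P2_def of_real_sum ofreal_cmod2 r2_def rC_def uAB_def vAB_def
    by (simp add: sum4 sum2 algebra_simps)
  then show ?thesis by simp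
qed

lemma E7a: "DY (uAB x) (vAB x) = DY (uBC x) (vBC x)"
  unfolding DY_def mY_def uAB_def vAB_def uBC_def vBC_def by (simp add: eval_nat_numeral algebra_simps power2_eq_square)

lemma E1b: "P4 (r2 (uAC x) (vAC x)) = P2 (rB x)"
proof -
  have "complex_of_real (P4 (r2 (uAC x) (vAC x))) = complex_of_real (P2 (rB x))"
    unfolding P4_def P2_def of_real_sum ofreal_cmod2 r2_def rB_def uAC_def vAC_def
    by (simp add: sum4 sum2 algebra_simps del: One_nat_def add_2_eq_Suc add_2_eq_Suc')
  then show ?thesis by simp
qed

lemma E1c: "P4 (r2 (uBC x) (vBC x)) = P2 (rA x)"
proof -
  have "complex_of_real (P4 (r2 (uBC x) (vBC x))) = complex_of_real (P2 (rA x))"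
    unfolding P4_def P2_def of_real_sum ofreal_cmod2 r2_def rA_def uBC_def vBC_def
    by (simp add: sum4 sum2 algebra_simps del: One_nat_def add_2_eq_Suc add_2_eq_Suc')
  then show ?thesis by simp
qed

lemma E7b: "DY (uAC x) (vAC x) = DY (uBC x) (vBC x)"
  unfolding DY_def mY_def uAC_ev vAC_ev uBC_ev vBC_ev by (simp add: algebra_simps power2_eq_square del: One_nat_def add_2_eq_Suc add_2_eq_Suc')

lemma NN_c: "complex_of_real ((NN x)^2) = (\<Sum>i<8. x i * cnj (x i))^2"
proof -
  have "complex_of_real (NN x) = (\<Sum>i<8. x i * cnj (x i))"
    unfolding NN_def of_real_sum ofreal_cmod2 ..
  then show ?thesis by (metis of_real_power)
qed

lemma E6a: "sY (uBC x) (vBC x) = (NN x)^2 + P2 (rA x) - P2 (rB x) - P2 (rC x)"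
proof -
  have "complex_of_real (sY (uBC x) (vBC x)) = complex_of_real ((NN x)^2 + P2 (rA x) - P2 (rB x) - P2 (rC x))"
    unfolding of_real_add of_real_diff NN_c unfolding sY_def P2_def of_real_sum of_real_add of_real_mult ofreal_cmod2
      rA_def rB_def rC_def uBC_ev vBC_ev mY_def
    by (simp add: sum8 sum2 algebra_simps power2_eq_square del: One_nat_def add_2_eq_Suc add_2_eq_Suc')
  then show ?thesis by (metis of_real_eq_iff)
qed

lemma E6b: "sY (uAC x) (vAC x) = (NN x)^2 + P2 (rB x) - P2 (rA x) - P2 (rC x)"
proof -
  have "complex_of_real (sY (uAC x) (vAC x)) = complex_of_real ((NN x)^2 + P2 (rB x) - P2 (rA x) - P2 (rC x))"
    unfolding of_real_add of_real_diff NN_c unfolding sY_def P2_def of_real_sum of_real_add of_real_mult ofreal_cmod2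
      rA_def rB_def rC_def uAC_ev vAC_ev mY_def
    by (simp add: sum8 sum2 algebra_simps power2_eq_square del: One_nat_def add_2_eq_Suc add_2_eq_Suc')
  then show ?thesis by (metis of_real_eq_iff)
qed

lemma E6c: "sY (uAB x) (vAB x) = (NN x)^2 + P2 (rC x) - P2 (rA x) - P2 (rB x)"
proof -
  have "complex_of_real (sY (uAB x) (vAB x)) = complex_of_real ((NN x)^2 + P2 (rC x) - P2 (rA x) - P2 (rB x))"
    unfolding of_real_add of_real_diff NN_c unfolding sY_def P2_def of_real_sum of_real_add of_real_mult ofreal_cmod2
      rA_def rB_def rC_def uAB_ev vAB_ev mY_def
    by (simp add: sum8 sum2 algebra_simps power2_eq_square del: One_nat_def add_2_eq_Suc add_2_eq_Suc')
  then show ?thesis by (metis of_real_eq_iff)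
qed

lemma pauli_carrier[simp]: "pauli k \<in> carrier_mat 2 2"
  by (simp add: pauli_def mat_of_rows_list_def numeral_2_eq_2)

lemma mtrace2: assumes "r \<in> carrier_mat 2 2" "A \<in> carrier_mat 2 2"
  shows "mtrace (r * A) = r $$ (0,0) * A $$ (0,0) + r $$ (0,1) * A $$ (1,0) + r $$ (1,0) * A $$ (0,1) + r $$ (1,1) * A $$ (1,1)"
  using assms by (simp add: mtrace_def scalar_prod_def lessThan_atLeast0[symmetric] sum2 algebra_simps del: One_nat_def)

lemma G2:
  fixes f :: "nat \<Rightarrow> nat \<Rightarrow> complex"
  assumes h: "\<And>i j. i < 2 \<Longrightarrow> j < 2 \<Longrightarrow> f i j = cnj (f j i)"
  defines "r \<equiv> mat 2 2 (\<lambda>(i,j). f i j)"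
  shows "(\<Sum>k<4. (Re (mtrace (r * pauli k)))^2) = 2 * (\<Sum>i<2. \<Sum>j<2. (cmod (f i j))^2)"
proof -
  have h1: "f 1 0 = cnj (f 0 1)" using h[of 1 0] by simp
  have h2: "Im (f 0 0) = 0" "Im (f 1 1) = 0"
    using h[of 0 0] h[of 1 1] by (simp_all add: complex_eq_iff)
  show ?thesis
    unfolding r_def
    apply (simp add: mtrace2 sum4 sum2 pauli_entries h1 h2 cmod_power2 algebra_simps del: One_nat_def)
    by (simp add: power2_eq_square algebra_simps)
qed

lemma r2_carrier[simp]: "r2 u v \<in> carrier_mat 4 4" by (simp add: r2_def)
lemma rA_carrier[simp]: "rA x \<in> carrier_mat 2 2" by (simp add: rA_def)
lemma rB_carrier[simp]: "rB x \<in> carrier_mat 2 2" by (simp add: rB_def)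
lemma rC_carrier[simp]: "rC x \<in> carrier_mat 2 2" by (simp add: rC_def)

lemma trAB1: "mtrace (r2 (uAB x) (vAB x) * kron2 A (pauli 0)) = mtrace (rA x * A)"
  if "A \<in> carrier_mat 2 2"
  using that by (simp add: mtrace_kron mtrace2 pauli_entries r2_def rA_def uAB_ev vAB_ev sum2 algebra_simps del: One_nat_def add_2_eq_Suc add_2_eq_Suc')
lemma trAB2: "mtrace (r2 (uAB x) (vAB x) * kron2 (pauli 0) B) = mtrace (rB x * B)"
  if "B \<in> carrier_mat 2 2"
  using that by (simp add: mtrace_kron mtrace2 pauli_entries r2_def rB_def uAB_ev vAB_ev sum2 algebra_simps del: One_nat_def add_2_eq_Suc add_2_eq_Suc')
lemma trAC1: "mtrace (r2 (uAC x) (vAC x) * kron2 A (pauli 0)) = mtrace (rA x * A)"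
  if "A \<in> carrier_mat 2 2"
  using that by (simp add: mtrace_kron mtrace2 pauli_entries r2_def rA_def uAC_ev vAC_ev sum2 algebra_simps del: One_nat_def add_2_eq_Suc add_2_eq_Suc')
lemma trAC2: "mtrace (r2 (uAC x) (vAC x) * kron2 (pauli 0) B) = mtrace (rC x * B)"
  if "B \<in> carrier_mat 2 2"
  using that by (simp add: mtrace_kron mtrace2 pauli_entries r2_def rC_def uAC_ev vAC_ev sum2 algebra_simps del: One_nat_def add_2_eq_Suc add_2_eq_Suc')
lemma trBC1: "mtrace (r2 (uBC x) (vBC x) * kron2 A (pauli 0)) = mtrace (rB x * A)"
  if "A \<in> carrier_mat 2 2"
  using that by (simp add: mtrace_kron mtrace2 pauli_entries r2_def rB_def uBC_ev vBC_ev sum2 algebra_simps del: One_nat_def add_2_eq_Suc add_2_eq_Suc')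
lemma trBC2: "mtrace (r2 (uBC x) (vBC x) * kron2 (pauli 0) B) = mtrace (rC x * B)"
  if "B \<in> carrier_mat 2 2"
  using that by (simp add: mtrace_kron mtrace2 pauli_entries r2_def rC_def uBC_ev vBC_ev sum2 algebra_simps del: One_nat_def add_2_eq_Suc add_2_eq_Suc')

lemma sum13: "(\<Sum>k\<in>{1..3}. g k) = g 1 + g 2 + g (3::nat)"
proof -
  have "{1..3::nat} = {1,2,3}" by auto
  then show ?thesis by (simp add: add.assoc)
qed

lemma r2_herm: "i < 4 \<Longrightarrow> j < 4 \<Longrightarrow> (\<lambda>i j. u i * cnj (u j) + v i * cnj (v j)) i j = cnj ((\<lambda>i j. u i * cnj (u j) + v i * cnj (v j)) j i)"
  by simp

lemma Scorr_decomp: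
  "Scorr (r2 u v) = 4 * P4 (r2 u v) - (corr (r2 u v) 0 0)^2 - (\<Sum>k\<in>{1..3}. (corr (r2 u v) k 0)^2) - (\<Sum>l\<in>{1..3}. (corr (r2 u v) 0 l)^2)"
proof -
  have g: "(\<Sum>k<4. \<Sum>l<4. (Re (mtrace (r2 u v * kron2 (pauli k) (pauli l))))^2) = 4 * P4 (r2 u v)"
    using G4[of "\<lambda>i j. u i * cnj (u j) + v i * cnj (v j)"] unfolding r2_def P4_def by simp
  show ?thesis
    using g unfolding Scorr_def corr_def sum13 sum4 by simp
qed

lemma proj_entry: "\<psi> \<in> carrier_vec 8 \<Longrightarrow> a < 8 \<Longrightarrow> b < 8 \<Longrightarrow> proj \<psi> $$ (a,b) = \<psi> $ a * cnj (\<psi> $ b)"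
  by (simp add: proj_def)

lemma rhoAB_eq: assumes "\<psi> \<in> carrier_vec 8"
  shows "rho_AB (proj \<psi>) = r2 (uAB (\<lambda>i. \<psi> $ i)) (vAB (\<lambda>i. \<psi> $ i))"
proof (rule eq_matI)
  fix i j assume "i < dim_row (r2 (uAB (\<lambda>i. \<psi> $ i)) (vAB (\<lambda>i. \<psi> $ i)))" "j < dim_col (r2 (uAB (\<lambda>i. \<psi> $ i)) (vAB (\<lambda>i. \<psi> $ i)))"
  then have ij: "i < 4" "j < 4" by (simp_all add: r2_def)
  then show "rho_AB (proj \<psi>) $$ (i, j) = r2 (uAB (\<lambda>i. \<psi> $ i)) (vAB (\<lambda>i. \<psi> $ i)) $$ (i, j)"
    using assms by (simp add: rho_AB_def r2_def uAB_def vAB_def sum2 proj_entry)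
qed (simp_all add: rho_AB_def r2_def)

lemma rhoAC_eq: assumes "\<psi> \<in> carrier_vec 8"
  shows "rho_AC (proj \<psi>) = r2 (uAC (\<lambda>i. \<psi> $ i)) (vAC (\<lambda>i. \<psi> $ i))"
proof (rule eq_matI)
  fix i j assume "i < dim_row (r2 (uAC (\<lambda>i. \<psi> $ i)) (vAC (\<lambda>i. \<psi> $ i)))" "j < dim_col (r2 (uAC (\<lambda>i. \<psi> $ i)) (vAC (\<lambda>i. \<psi> $ i)))"
  then have ij: "i < 4" "j < 4" by (simp_all add: r2_def)
  have b1: "4 * (k div 2) + 2 + k mod 2 < 8" "4 * (k div 2) + k mod 2 < 8" if "k < 4" for k::nat
    using less4_cases[OF that] by (auto simp del: One_nat_def add_2_eq_Suc add_2_eq_Suc')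
  show "rho_AC (proj \<psi>) $$ (i, j) = r2 (uAC (\<lambda>i. \<psi> $ i)) (vAC (\<lambda>i. \<psi> $ i)) $$ (i, j)"
    using assms ij b1[OF ij(1)] b1[OF ij(2)] by (simp add: rho_AC_def r2_def uAC_def vAC_def sum2 proj_entry add.commute add.left_commute)
qed (simp_all add: rho_AC_def r2_def)

lemma rhoBC_eq: assumes "\<psi> \<in> carrier_vec 8"
  shows "rho_BC (proj \<psi>) = r2 (uBC (\<lambda>i. \<psi> $ i)) (vBC (\<lambda>i. \<psi> $ i))"
proof (rule eq_matI)
  fix i j assume "i < dim_row (r2 (uBC (\<lambda>i. \<psi> $ i)) (vBC (\<lambda>i. \<psi> $ i)))" "j < dim_col (r2 (uBC (\<lambda>i. \<psi> $ i)) (vBC (\<lambda>i. \<psi> $ i)))"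
  then have ij: "i < 4" "j < 4" by (simp_all add: r2_def)
  then show "rho_BC (proj \<psi>) $$ (i, j) = r2 (uBC (\<lambda>i. \<psi> $ i)) (vBC (\<lambda>i. \<psi> $ i)) $$ (i, j)"
    using assms by (simp add: rho_BC_def r2_def uBC_def vBC_def sum2 proj_entry)
qed (simp_all add: rho_BC_def r2_def)

lemma rhoA_eq: assumes "\<psi> \<in> carrier_vec 8"
  shows "rho_A (proj \<psi>) = rA (\<lambda>i. \<psi> $ i)"
proof (rule eq_matI)
  fix i j assume "i < dim_row (rA (\<lambda>i. \<psi> $ i))" "j < dim_col (rA (\<lambda>i. \<psi> $ i))"
  then have ij: "i < 2" "j < 2" by (simp_all add: rA_def)
  have b: "4 * k + 2 * b + c < 8" if "k < 2" "b < 2" "c < 2" for k b c :: nat using that by linarith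
  show "rho_A (proj \<psi>) $$ (i, j) = rA (\<lambda>i. \<psi> $ i) $$ (i, j)"
    using assms ij by (simp add: rho_A_def rA_def proj_entry b)
qed (simp_all add: rho_A_def rA_def)

lemma trA0: "mtrace (rA x * pauli 0) = complex_of_real (NN x)"
  unfolding NN_def of_real_sum ofreal_cmod2
  by (simp add: mtrace2 pauli_entries rA_def sum2 sum8 algebra_simps del: One_nat_def add_2_eq_Suc add_2_eq_Suc')
lemma trB0: "mtrace (rB x * pauli 0) = complex_of_real (NN x)"
  unfolding NN_def of_real_sum ofreal_cmod2
  by (simp add: mtrace2 pauli_entries rB_def sum2 sum8 algebra_simps del: One_nat_def add_2_eq_Suc add_2_eq_Suc')
lemma trC0: "mtrace (rC x * pauli 0) = complex_of_real (NN x)"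
  unfolding NN_def of_real_sum ofreal_cmod2
  by (simp add: mtrace2 pauli_entries rC_def sum2 sum8 algebra_simps del: One_nat_def add_2_eq_Suc add_2_eq_Suc')

lemma G2A: "(\<Sum>k<4. (Re (mtrace (rA x * pauli k)))^2) = 2 * P2 (rA x)"
proof -
  define f where "f = (\<lambda>i j. \<Sum>b<2. \<Sum>c<2. x (4*i+2*b+c) * cnj (x (4*j+2*b+c)))"
  have h: "f i j = cnj (f j i)" if "i < 2" "j < 2" for i j
    unfolding f_def by (simp add: mult.commute)
  have "rA x = mat 2 2 (\<lambda>(i,j). f i j)" unfolding rA_def f_def by simp
  moreover have "P2 (rA x) = (\<Sum>i<2. \<Sum>j<2. (cmod (f i j))^2)" unfolding rA_def f_def P2_def by simp
  ultimately show ?thesis using G2[of f, OF h] by simp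
qed
lemma G2B: "(\<Sum>k<4. (Re (mtrace (rB x * pauli k)))^2) = 2 * P2 (rB x)"
proof -
  define f where "f = (\<lambda>i j. \<Sum>a<2. \<Sum>c<2. x (4*a+2*i+c) * cnj (x (4*a+2*j+c)))"
  have h: "f i j = cnj (f j i)" if "i < 2" "j < 2" for i j
    unfolding f_def by (simp add: mult.commute)
  have "rB x = mat 2 2 (\<lambda>(i,j). f i j)" unfolding rB_def f_def by simp
  moreover have "P2 (rB x) = (\<Sum>i<2. \<Sum>j<2. (cmod (f i j))^2)" unfolding rB_def f_def P2_def by simp
  ultimately show ?thesis using G2[of f, OF h] by simp
qed
lemma G2C: "(\<Sum>k<4. (Re (mtrace (rC x * pauli k)))^2) = 2 * P2 (rC x)"
proof -
  define f where "f = (\<lambda>i j. \<Sum>a<2. \<Sum>b<2. x (4*a+2*b+i) * cnj (x (4*a+2*b+j)))"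
  have h: "f i j = cnj (f j i)" if "i < 2" "j < 2" for i j
    unfolding f_def by (simp add: mult.commute)
  have "rC x = mat 2 2 (\<lambda>(i,j). f i j)" unfolding rC_def f_def by simp
  moreover have "P2 (rC x) = (\<Sum>i<2. \<Sum>j<2. (cmod (f i j))^2)" unfolding rC_def f_def P2_def by simp
  ultimately show ?thesis using G2[of f, OF h] by simp
qed

lemma conc_r2: "(concurrence (r2 u v))^2 = sY u v - 2 * cmod (DY u v)"
  using conc_rank2[of u v] unfolding r2_def sY_def DY_def by simp

lemma pure_main:
  assumes u: "unit_vec8 \<psi>"
  shows "0 \<le> tangle_pure \<psi>"
    "Scorr (rho_AB (proj \<psi>)) + Scorr (rho_AC (proj \<psi>)) + tangle_pure \<psi> \<le> 3"
    "Scorr (rho_AB (proj \<psi>)) + Scorr (rho_BC (proj \<psi>)) + tangle_pure \<psi> \<le> 3"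
    "Scorr (rho_AC (proj \<psi>)) + Scorr (rho_BC (proj \<psi>)) + tangle_pure \<psi> \<le> 3"
proof -
  define x where "x = (\<lambda>i. \<psi> $ i)"
  have c: "\<psi> \<in> carrier_vec 8" using u unfolding unit_vec8_def by simp
  have N: "NN x = 1" using u unfolding unit_vec8_def NN_def x_def by simp
  have RAB: "rho_AB (proj \<psi>) = r2 (uAB x) (vAB x)" unfolding x_def by (rule rhoAB_eq[OF c])
  have RAC: "rho_AC (proj \<psi>) = r2 (uAC x) (vAC x)" unfolding x_def by (rule rhoAC_eq[OF c])
  have RBC: "rho_BC (proj \<psi>) = r2 (uBC x) (vBC x)" unfolding x_def by (rule rhoBC_eq[OF c])
  have RA: "rho_A (proj \<psi>) = rA x" unfolding x_def by (rule rhoA_eq[OF c])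
  define a where "a = (\<lambda>k. Re (mtrace (rA x * pauli k)))"
  define b where "b = (\<lambda>k. Re (mtrace (rB x * pauli k)))"
  define cc where "cc = (\<lambda>k. Re (mtrace (rC x * pauli k)))"
  define A2 where "A2 = (\<Sum>k\<in>{1..3}. (a k)^2)"
  define B2 where "B2 = (\<Sum>k\<in>{1..3}. (b k)^2)"
  define C2 where "C2 = (\<Sum>k\<in>{1..3}. (cc k)^2)"
  have a0: "a 0 = 1" "b 0 = 1" "cc 0 = 1" unfolding a_def b_def cc_def trA0 trB0 trC0 N by simp_all
  have FA: "1 + A2 = 2 * P2 (rA x)" using G2A[of x] a0 unfolding A2_def sum13 sum4 a_def by simp
  have FB: "1 + B2 = 2 * P2 (rB x)" using G2B[of x] a0 unfolding B2_def sum13 sum4 b_def by simp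
  have FC: "1 + C2 = 2 * P2 (rC x)" using G2C[of x] a0 unfolding C2_def sum13 sum4 cc_def by simp
  have A20: "0 \<le> A2" "0 \<le> B2" "0 \<le> C2" unfolding A2_def B2_def C2_def by (simp_all add: sum_nonneg)
  have SAB: "Scorr (rho_AB (proj \<psi>)) = 4 * P2 (rC x) - 1 - A2 - B2"
    unfolding RAB Scorr_decomp E1a corr_def trAB1[OF pauli_carrier] trAB2[OF pauli_carrier]
    using a0 unfolding A2_def B2_def a_def b_def by simp
  have SAC: "Scorr (rho_AC (proj \<psi>)) = 4 * P2 (rB x) - 1 - A2 - C2"
    unfolding RAC Scorr_decomp E1b corr_def trAC1[OF pauli_carrier] trAC2[OF pauli_carrier]
    using a0 unfolding A2_def C2_def a_def cc_def by simp
  have SBC: "Scorr (rho_BC (proj \<psi>)) = 4 * P2 (rA x) - 1 - B2 - C2"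
    unfolding RBC Scorr_decomp E1c corr_def trBC1[OF pauli_carrier] trBC2[OF pauli_carrier]
    using a0 unfolding B2_def C2_def b_def cc_def by simp
  define q where "q = cmod (DY (uBC x) (vBC x))"
  have CAB: "(concurrence (rho_AB (proj \<psi>)))^2 = 1 + P2 (rC x) - P2 (rA x) - P2 (rB x) - 2 * q"
    unfolding RAB conc_r2 E6c E7a N q_def by simp
  have CAC: "(concurrence (rho_AC (proj \<psi>)))^2 = 1 + P2 (rB x) - P2 (rA x) - P2 (rC x) - 2 * q"
    unfolding RAC conc_r2 E6b E7b N q_def by simp
  have CBC: "(concurrence (rho_BC (proj \<psi>)))^2 = 1 + P2 (rA x) - P2 (rB x) - P2 (rC x) - 2 * q"
    unfolding RBC conc_r2 E6a N q_def by simp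
  have C0: "0 \<le> (concurrence (rho_AB (proj \<psi>)))^2" "0 \<le> (concurrence (rho_AC (proj \<psi>)))^2"
     "0 \<le> (concurrence (rho_BC (proj \<psi>)))^2" by simp_all
  have q0: "0 \<le> q" unfolding q_def by simp
  have T: "tangle_pure \<psi> = 1 - A2 - (concurrence (rho_AB (proj \<psi>)))^2 - (concurrence (rho_AC (proj \<psi>)))^2"
    unfolding tangle_pure_def bloch_A_def RA A2_def a_def ..
  show "0 \<le> tangle_pure \<psi>" using T CAB CAC FA q0 by argo
  show "Scorr (rho_AB (proj \<psi>)) + Scorr (rho_AC (proj \<psi>)) + tangle_pure \<psi> \<le> 3"
    using T CAB CAC CBC C0 FA FB FC A20 SAB SAC by argo
  show "Scorr (rho_AB (proj \<psi>)) + Scorr (rho_BC (proj \<psi>)) + tangle_pure \<psi> \<le> 3"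
    using T CAB CAC CBC C0 FA FB FC A20 SAB SBC by argo
  show "Scorr (rho_AC (proj \<psi>)) + Scorr (rho_BC (proj \<psi>)) + tangle_pure \<psi> \<le> 3"
    using T CAB CAC CBC C0 FA FB FC A20 SAC SBC by argo
qed

lemma jensen_sq:
  fixes p t :: "nat \<Rightarrow> real"
  assumes "\<And>n. n < m \<Longrightarrow> 0 \<le> p n" "(\<Sum>n<m. p n) = 1"
  shows "(\<Sum>n<m. p n * t n)^2 \<le> (\<Sum>n<m. p n * (t n)^2)"
proof -
  define c where "c = (\<Sum>n<m. p n * t n)"
  have "0 \<le> (\<Sum>n<m. p n * (t n - c)^2)" using assms(1) by (intro sum_nonneg) simp
  also have "\<dots> = (\<Sum>n<m. p n * (t n)^2) - 2 * c * (\<Sum>n<m. p n * t n) + c^2 * (\<Sum>n<m. p n)"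
    by (simp add: power2_diff algebra_simps sum.distrib sum_subtractf sum_distrib_left sum_distrib_right)
  finally show ?thesis using assms(2) unfolding c_def by (simp add: power2_eq_square)
qed

lemma mtrace_sum: assumes "r \<in> carrier_mat 4 4"
  shows "mtrace (r * kron2 A B) = (\<Sum>i<4. \<Sum>j<4. r $$ (i,j) * kron2 A B $$ (j,i))"
  using assms by (simp add: mtrace_def kron2_def scalar_prod_def lessThan_atLeast0)

lemma corr_lin:
  fixes p :: "nat \<Rightarrow> real"
  assumes r: "r \<in> carrier_mat 4 4" and R: "\<And>n. R n \<in> carrier_mat 4 4"
    and e: "\<And>i j. i < 4 \<Longrightarrow> j < 4 \<Longrightarrow> r $$ (i,j) = (\<Sum>n<m. complex_of_real (p n) * R n $$ (i,j))"
  shows "corr r k l = (\<Sum>n<m. p n * corr (R n) k l)"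
proof -
  have "mtrace (r * kron2 (pauli k) (pauli l)) = (\<Sum>i<4. \<Sum>j<4. (\<Sum>n<m. complex_of_real (p n) * R n $$ (i,j)) * kron2 (pauli k) (pauli l) $$ (j,i))"
    unfolding mtrace_sum[OF r] by (intro sum.cong refl) (simp add: e)
  also have "\<dots> = (\<Sum>n<m. complex_of_real (p n) * mtrace (R n * kron2 (pauli k) (pauli l)))"
    unfolding mtrace_sum[OF R] sum_distrib_right sum_distrib_left
    by (subst sum.swap, subst (2) sum.swap) (simp add: algebra_simps)
  finally show ?thesis unfolding corr_def by (simp add: Re_sum)
qed

lemma Scorr_convex:
  fixes p :: "nat \<Rightarrow> real"
  assumes r: "r \<in> carrier_mat 4 4" and R: "\<And>n. R n \<in> carrier_mat 4 4"
    and e: "\<And>i j. i < 4 \<Longrightarrow> j < 4 \<Longrightarrow> r $$ (i,j) = (\<Sum>n<m. complex_of_real (p n) * R n $$ (i,j))"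
    and p: "\<And>n. n < m \<Longrightarrow> 0 \<le> p n" "(\<Sum>n<m. p n) = 1"
  shows "Scorr r \<le> (\<Sum>n<m. p n * Scorr (R n))"
proof -
  have "Scorr r = (\<Sum>k\<in>{1..3}. \<Sum>l\<in>{1..3}. (\<Sum>n<m. p n * corr (R n) k l)^2)"
    unfolding Scorr_def using corr_lin[OF r R e] by simp
  also have "\<dots> \<le> (\<Sum>k\<in>{1..3}. \<Sum>l\<in>{1..3}. \<Sum>n<m. p n * (corr (R n) k l)^2)"
    by (intro sum_mono jensen_sq p) auto
  also have "\<dots> = (\<Sum>n<m. p n * Scorr (R n))"
    unfolding Scorr_def sum_distrib_left
    by (subst sum.swap, subst (2) sum.swap) simp
  finally show ?thesis .
qed

lemma idxAC: "i < 4 \<Longrightarrow> b < 2 \<Longrightarrow> 4 * (i div 2) + 2 * b + i mod 2 < (8::nat)"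
  using less4_cases[of i] by (auto simp del: One_nat_def add_2_eq_Suc add_2_eq_Suc')

lemma red_lin:
  fixes p :: "nat \<Rightarrow> real"
  assumes e8: "\<And>i j. i < 8 \<Longrightarrow> j < 8 \<Longrightarrow> \<rho> $$ (i,j) = (\<Sum>n<m. complex_of_real (p n) * R n $$ (i,j))"
  assumes ij: "i < 4" "j < 4"
  shows "rho_AB \<rho> $$ (i,j) = (\<Sum>n<m. complex_of_real (p n) * rho_AB (R n) $$ (i,j))"
    "rho_AC \<rho> $$ (i,j) = (\<Sum>n<m. complex_of_real (p n) * rho_AC (R n) $$ (i,j))"
    "rho_BC \<rho> $$ (i,j) = (\<Sum>n<m. complex_of_real (p n) * rho_BC (R n) $$ (i,j))"
proof -
  have "rho_AB \<rho> $$ (i,j) = (\<Sum>c<2. \<Sum>n<m. complex_of_real (p n) * R n $$ (2*i+c, 2*j+c))"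
    using ij unfolding rho_AB_def by (simp add: e8)
  also have "\<dots> = (\<Sum>n<m. complex_of_real (p n) * rho_AB (R n) $$ (i,j))"
    using ij unfolding rho_AB_def by (subst sum.swap) (simp add: sum_distrib_left)
  finally show "rho_AB \<rho> $$ (i,j) = (\<Sum>n<m. complex_of_real (p n) * rho_AB (R n) $$ (i,j))" .
  have "rho_AC \<rho> $$ (i,j) = (\<Sum>b<2. \<Sum>n<m. complex_of_real (p n) * R n $$ (4*(i div 2) + 2*b + i mod 2, 4*(j div 2) + 2*b + j mod 2))"
    using ij unfolding rho_AC_def by (simp add: e8 idxAC)
  also have "\<dots> = (\<Sum>n<m. complex_of_real (p n) * rho_AC (R n) $$ (i,j))"
    using ij unfolding rho_AC_def by (subst sum.swap) (simp add: sum_distrib_left)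
  finally show "rho_AC \<rho> $$ (i,j) = (\<Sum>n<m. complex_of_real (p n) * rho_AC (R n) $$ (i,j))" .
  have "rho_BC \<rho> $$ (i,j) = (\<Sum>a<2. \<Sum>n<m. complex_of_real (p n) * R n $$ (4*a+i, 4*a+j))"
    using ij unfolding rho_BC_def by (simp add: e8)
  also have "\<dots> = (\<Sum>n<m. complex_of_real (p n) * rho_BC (R n) $$ (i,j))"
    using ij unfolding rho_BC_def by (subst sum.swap) (simp add: sum_distrib_left)
  finally show "rho_BC \<rho> $$ (i,j) = (\<Sum>n<m. complex_of_real (p n) * rho_BC (R n) $$ (i,j))" .
qed

definition dval :: "(real \<times> complex vec) list \<Rightarrow> real" where
  "dval d = (\<Sum>n<length d. fst (d ! n) * tangle_pure (snd (d ! n)))"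

lemma mixed_bound:
  assumes d: "pure_decomp \<rho> d"
  shows "S_max_total \<rho> + dval d \<le> 3" "0 \<le> dval d"
proof -
  define m where "m = length d"
  define p where "p = (\<lambda>n. fst (d ! n))"
  define R where "R = (\<lambda>n. proj (snd (d ! n)))"
  have p0: "\<And>n. n < m \<Longrightarrow> 0 \<le> p n" and uv: "\<And>n. n < m \<Longrightarrow> unit_vec8 (snd (d ! n))"
    using d unfolding pure_decomp_def p_def m_def by (auto dest: nth_mem)
  have p1: "(\<Sum>n<m. p n) = 1" using d unfolding pure_decomp_def p_def m_def by simp
  have e8: "\<And>i j. i < 8 \<Longrightarrow> j < 8 \<Longrightarrow> \<rho> $$ (i,j) = (\<Sum>n<m. complex_of_real (p n) * R n $$ (i,j))"
    using d unfolding pure_decomp_def p_def m_def R_def by simp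
  have cAB: "rho_AB r \<in> carrier_mat 4 4" and cAC: "rho_AC r \<in> carrier_mat 4 4" and cBC: "rho_BC r \<in> carrier_mat 4 4" for r
    by (simp_all add: rho_AB_def rho_AC_def rho_BC_def)
  have SAB: "Scorr (rho_AB \<rho>) \<le> (\<Sum>n<m. p n * Scorr (rho_AB (R n)))"
    by (rule Scorr_convex[OF cAB cAB red_lin(1)[OF e8] p0 p1])
  have SAC: "Scorr (rho_AC \<rho>) \<le> (\<Sum>n<m. p n * Scorr (rho_AC (R n)))"
    by (rule Scorr_convex[OF cAC cAC red_lin(2)[OF e8] p0 p1])
  have SBC: "Scorr (rho_BC \<rho>) \<le> (\<Sum>n<m. p n * Scorr (rho_BC (R n)))"
    by (rule Scorr_convex[OF cBC cBC red_lin(3)[OF e8] p0 p1])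
  have dv: "dval d = (\<Sum>n<m. p n * tangle_pure (snd (d ! n)))" unfolding dval_def m_def p_def ..
  note pm = pure_main[OF uv, folded R_def]
  show "0 \<le> dval d" unfolding dv using p0 pm(1) by (intro sum_nonneg) (simp add: R_def)
  have b3: "(\<Sum>n<m. p n * X n) + (\<Sum>n<m. p n * Y n) + (\<Sum>n<m. p n * tangle_pure (snd (d ! n))) \<le> 3"
    if "\<And>n. n < m \<Longrightarrow> X n + Y n + tangle_pure (snd (d ! n)) \<le> 3" for X Y
  proof -
    have "(\<Sum>n<m. p n * X n) + (\<Sum>n<m. p n * Y n) + (\<Sum>n<m. p n * tangle_pure (snd (d ! n)))
        = (\<Sum>n<m. p n * (X n + Y n + tangle_pure (snd (d ! n))))"
      by (simp add: sum.distrib algebra_simps)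
    also have "\<dots> \<le> (\<Sum>n<m. p n * 3)"
      by (intro sum_mono mult_left_mono that p0) auto
    also have "\<dots> = 3" using p1 by (simp add: sum_distrib_right[symmetric])
    finally show ?thesis .
  qed
  have 1: "Scorr (rho_AB \<rho>) + Scorr (rho_AC \<rho>) + dval d \<le> 3"
    using b3[of "\<lambda>n. Scorr (rho_AB (R n))" "\<lambda>n. Scorr (rho_AC (R n))"] pm(2) SAB SAC unfolding dv R_def by force
  have 2: "Scorr (rho_AB \<rho>) + Scorr (rho_BC \<rho>) + dval d \<le> 3"
    using b3[of "\<lambda>n. Scorr (rho_AB (R n))" "\<lambda>n. Scorr (rho_BC (R n))"] pm(3) SAB SBC unfolding dv R_def by force
  have 3: "Scorr (rho_AC \<rho>) + Scorr (rho_BC \<rho>) + dval d \<le> 3"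
    using b3[of "\<lambda>n. Scorr (rho_AC (R n))" "\<lambda>n. Scorr (rho_BC (R n))"] pm(4) SAC SBC unfolding dv R_def by force
  show "S_max_total \<rho> + dval d \<le> 3"
    unfolding S_max_total_def using 1 2 3 by simp
qed

definition QF :: "(nat \<Rightarrow> nat \<Rightarrow> complex) \<Rightarrow> (nat \<Rightarrow> complex) \<Rightarrow> complex" where
  "QF F v = (\<Sum>i<8. \<Sum>j<8. cnj (v i) * F i j * v j)"

lemma sum_delta8: fixes a :: complex shows "k < 8 \<Longrightarrow> (\<Sum>i<8. (if i = k then a else 0) * g i) = a * g (k::nat)"
proof -
  assume k: "k < 8"
  have "(\<Sum>i<8. (if i = k then a else 0) * g i) = (\<Sum>i<8. if i = k then a * g k else 0)"
    by (intro sum.cong) auto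
  then show ?thesis using k by simp
qed

lemma sum_delta8': fixes a :: complex shows "k < 8 \<Longrightarrow> (\<Sum>i<8. g i * (if i = k then a else 0)) = g (k::nat) * a"
proof -
  assume k: "k < 8"
  have "(\<Sum>i<8. g i * (if i = k then a else 0)) = (\<Sum>i<8. if i = k then g k * a else 0)"
    by (intro sum.cong) auto
  then show ?thesis using k by simp
qed

lemma QF_shift:
  assumes k: "k < 8"
  shows "QF F (\<lambda>i. v i - (if i = k then t else 0)) =
    QF F v - cnj t * (\<Sum>j<8. F k j * v j) - t * (\<Sum>i<8. cnj (v i) * F i k) + cnj t * t * F k k"
proof -
  have e: "cnj (v i - (if i = k then t else 0)) * F i j * (v j - (if j = k then t else 0))
     = cnj (v i) * F i j * v j - (if i = k then cnj t else 0) * (F i j * v j)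
       - (cnj (v i) * F i j) * (if j = k then t else 0)
       + (if i = k then cnj t else 0) * (F i j * (if j = k then t else 0))" for i j
    by (simp add: algebra_simps)
  have S2: "(\<Sum>i<8. \<Sum>j<8. (if i = k then cnj t else 0) * (F i j * v j)) = cnj t * (\<Sum>j<8. F k j * v j)"
    unfolding sum_distrib_left[symmetric] by (rule sum_delta8[OF k])
  have S3: "(\<Sum>i<8. \<Sum>j<8. (cnj (v i) * F i j) * (if j = k then t else 0)) = t * (\<Sum>i<8. cnj (v i) * F i k)"
    unfolding sum_delta8'[OF k] by (simp add: sum_distrib_left mult.commute)
  have S4: "(\<Sum>i<8. \<Sum>j<8. (if i = k then cnj t else 0) * (F i j * (if j = k then t else 0))) = cnj t * t * F k k"
    unfolding sum_distrib_left[symmetric] sum_delta8[OF k] sum_delta8'[OF k] by simp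
  show ?thesis
    unfolding QF_def e sum.distrib sum_subtractf S2 S3 S4 ..
qed

definition hermF :: "(nat \<Rightarrow> nat \<Rightarrow> complex) \<Rightarrow> bool" where
  "hermF F \<longleftrightarrow> (\<forall>i<8. \<forall>j<8. F i j = cnj (F j i))"
definition psdF :: "(nat \<Rightarrow> nat \<Rightarrow> complex) \<Rightarrow> bool" where
  "psdF F \<longleftrightarrow> (\<forall>v. 0 \<le> Re (QF F v))"

lemma QF_unit: "j < 8 \<Longrightarrow> QF F (\<lambda>i. if i = j then 1 else 0) = F j j"
proof -
  assume j: "j < 8"
  have "QF F (\<lambda>i. if i = j then 1 else 0) = (\<Sum>i<8. (if i = j then 1 else 0) * (\<Sum>l<8. F i l * (if l = j then 1 else 0)))"
    unfolding QF_def sum_distrib_left by (intro sum.cong refl) (simp add: algebra_simps)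
  also have "\<dots> = F j j" unfolding sum_delta8'[OF j] sum_delta8[OF j] by simp
  finally show ?thesis .
qed

lemma psd_diag: assumes "psdF F" "j < 8" shows "0 \<le> Re (F j j)"
proof -
  have "0 \<le> Re (QF F (\<lambda>i. if i = j then 1 else 0))" using assms(1) unfolding psdF_def by blast
  then show ?thesis using QF_unit[OF assms(2), of F] by simp
qed

lemma herm_diag: assumes "hermF F" "j < 8" shows "F j j = complex_of_real (Re (F j j))"
proof -
  have "F j j = cnj (F j j)" using assms unfolding hermF_def by blast
  then have "Im (F j j) = 0" by (simp add: complex_eq_iff)
  then show ?thesis by (simp add: complex_eq_iff)
qed

lemma psd_offdiag0:
  assumes h: "hermF F" and p: "psdF F" and k: "k < 8" and j: "j < 8" and z: "F k k = 0"
  shows "F j k = 0"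
proof (rule ccontr)
  assume nz: "F j k \<noteq> 0"
  then have jk: "j \<noteq> k" using z by auto
  define c where "c = (cmod (F j k))^2"
  have c0: "c > 0" using nz unfolding c_def by simp
  define s where "s = (Re (F j j) + 1) / (2 * c)"
  define t where "t = complex_of_real s * cnj (F j k)"
  define e where "e = (\<lambda>i. if i = j then (1::complex) else 0)"
  have fkj: "F k j = cnj (F j k)" using h k j unfolding hermF_def by blast
  have s1: "(\<Sum>l<8. F k l * e l) = F k j" unfolding e_def sum_delta8'[OF j] by simp
  have s2: "(\<Sum>i<8. cnj (e i) * F i k) = F j k"
  proof -
    have "(\<Sum>i<8. cnj (e i) * F i k) = (\<Sum>i<8. (if i = j then 1 else 0) * F i k)"
      unfolding e_def by (intro sum.cong refl) simp
    then show ?thesis unfolding sum_delta8[OF j] by simp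
  qed
  have "QF F (\<lambda>i. e i - (if i = k then t else 0)) = F j j - cnj t * F k j - t * F j k"
    unfolding QF_shift[OF k] s1 s2 z using QF_unit[OF j, of F] unfolding e_def by simp
  also have "\<dots> = F j j - complex_of_real (2 * s * c)"
    unfolding t_def fkj c_def of_real_mult complex_norm_square[symmetric] by (simp add: algebra_simps complex_norm_square flip: of_real_power)
  finally have X: "Re (QF F (\<lambda>i. e i - (if i = k then t else 0))) = Re (F j j) - 2 * s * c" by simp
  have Y: "Re (F j j) - 2 * s * c = -1" unfolding s_def using c0 by (simp add: field_simps)
  have "Re (QF F (\<lambda>i. e i - (if i = k then t else 0))) = -1" using X Y by simp
  moreover have "0 \<le> Re (QF F (\<lambda>i. e i - (if i = k then t else 0)))" using p unfolding psdF_def by blast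
  ultimately show False by simp
qed

lemma schur_step:
  assumes h: "hermF F" and p: "psdF F" and k: "k < 8" and r: "Re (F k k) > 0"
  and w_def: "w = (\<lambda>i. F i k / complex_of_real (sqrt (Re (F k k))))"
  and G_def: "G = (\<lambda>i j. F i j - w i * cnj (w j))"
  shows "hermF G" "psdF G" "\<And>j. j < 8 \<Longrightarrow> G k j = 0" "\<And>i. i < 8 \<Longrightarrow> G i k = 0"
    "\<And>i j. G i j + w i * cnj (w j) = F i j"
proof -
  define rr where "rr = Re (F k k)"
  have Fkk: "F k k = complex_of_real rr" unfolding rr_def by (rule herm_diag[OF h k])
  have rr0: "rr > 0" using r unfolding rr_def .
  have ww: "w i * cnj (w j) = F i k * cnj (F j k) / complex_of_real rr" for i j
  proof -
    have "complex_of_real (sqrt rr) * complex_of_real (sqrt rr) = complex_of_real rr"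
    proof -
      have "sqrt rr * sqrt rr = rr" using rr0 by simp
      then show ?thesis unfolding of_real_mult[symmetric] by simp
    qed
    then show ?thesis unfolding w_def rr_def[symmetric] by (simp add: field_simps)
  qed
  have hF: "F i j = cnj (F j i)" if "i < 8" "j < 8" for i j using h that unfolding hermF_def by blast
  show "hermF G" unfolding hermF_def
  proof (intro allI impI)
    fix i j :: nat assume ij: "i < 8" "j < 8"
    have "F i j = cnj (F j i)" by (rule hF[OF ij])
    then show "G i j = cnj (G j i)" unfolding G_def by simp
  qed
  show "G k j = 0" if "j < 8" for j
    unfolding G_def ww using hF[OF k that] Fkk rr0 by (simp add: field_simps)
  show "G i k = 0" if "i < 8" for i
    unfolding G_def ww using hF[OF that k] Fkk rr0 by (simp add: field_simps)
  show "G i j + w i * cnj (w j) = F i j" for i j unfolding G_def by simp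
  show "psdF G" unfolding psdF_def
  proof
    fix v :: "nat \<Rightarrow> complex"
    define \<alpha> where "\<alpha> = (\<Sum>j<8. F k j * v j)"
    define t where "t = \<alpha> / F k k"
    have a1: "(\<Sum>i<8. cnj (v i) * F i k) = cnj \<alpha>"
      unfolding \<alpha>_def cnj_sum
    proof (intro sum.cong refl)
      fix i assume "i \<in> {..<8::nat}"
      then have "F i k = cnj (F k i)" using hF[of i k] k by simp
      then show "cnj (v i) * F i k = cnj (F k i * v i)" by simp
    qed
    have a2: "(\<Sum>j<8. cnj (F j k) * v j) = \<alpha>"
    proof (unfold \<alpha>_def, intro sum.cong refl)
      fix j assume "j \<in> {..<8::nat}"
      then have "F k j = cnj (F j k)" using hF[of k j] k by simp
      then show "cnj (F j k) * v j = F k j * v j" by simp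
    qed
    have "QF G v = QF F v - (\<Sum>i<8. \<Sum>j<8. cnj (v i) * (w i * cnj (w j)) * v j)"
      unfolding QF_def G_def by (simp add: algebra_simps sum_subtractf)
    also have "(\<Sum>i<8. \<Sum>j<8. cnj (v i) * (w i * cnj (w j)) * v j)
        = (\<Sum>i<8. cnj (v i) * F i k) * (\<Sum>j<8. cnj (F j k) * v j) / complex_of_real rr"
      unfolding ww sum_product by (simp add: sum_divide_distrib algebra_simps)
    also have "\<dots> = cnj \<alpha> * \<alpha> / complex_of_real rr" unfolding a1 a2 ..
    finally have e1: "QF G v = QF F v - cnj \<alpha> * \<alpha> / complex_of_real rr" .
    have e2: "QF F (\<lambda>i. v i - (if i = k then t else 0)) = QF F v - cnj \<alpha> * \<alpha> / complex_of_real rr"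
      unfolding QF_shift[OF k] a1 \<alpha>_def[symmetric] t_def Fkk using rr0 by (simp add: field_simps)
    have "0 \<le> Re (QF F (\<lambda>i. v i - (if i = k then t else 0)))" using p unfolding psdF_def by blast
    then show "0 \<le> Re (QF G v)" unfolding e1 e2[symmetric] .
  qed
qed

lemma gram:
  "n \<le> 8 \<Longrightarrow> hermF F \<Longrightarrow> psdF F \<Longrightarrow> (\<forall>i<8. \<forall>j<8. (i < 8 - n \<or> j < 8 - n) \<longrightarrow> F i j = 0)
   \<Longrightarrow> \<exists>(m::nat) W. \<forall>i<8. \<forall>j<8. F i j = (\<Sum>l<m. W l i * cnj (W l j))"
proof (induction n arbitrary: F)
  case 0
  have z: "F i j = 0" if "i < 8" "j < 8" for i j
  proof -
    have "i < 8 - 0" using that(1) by simp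
    then show ?thesis using 0(4) that by blast
  qed
  show ?case
    by (rule exI[of _ "0::nat"], rule exI[of _ "\<lambda>(_::nat) (_::nat). 0::complex"]) (use z in simp)
next
  case (Suc n)
  define k where "k = 7 - n"
  have k: "k < 8" unfolding k_def by simp
  have k1: "8 - Suc n = k" using Suc.prems(1) unfolding k_def by simp
  have k2: "8 - n = Suc k" using Suc.prems(1) unfolding k_def by simp
  have hF: "F i j = cnj (F j i)" if "i < 8" "j < 8" for i j using Suc.prems(2) that unfolding hermF_def by blast
  have z: "F i j = 0" if "i < 8" "j < 8" "i < k \<or> j < k" for i j using Suc.prems(4) that unfolding k1 by blast
  show ?case
  proof (cases "Re (F k k) > 0")
    case True
    define w where "w = (\<lambda>i. F i k / complex_of_real (sqrt (Re (F k k))))"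
    define G where "G = (\<lambda>i j. F i j - w i * cnj (w j))"
    note S = schur_step[OF Suc.prems(2,3) k True w_def G_def]
    have w0: "w i = 0" if "i < k" for i using z[of i k] that k unfolding w_def by simp
    have zG: "\<forall>i<8. \<forall>j<8. (i < 8 - n \<or> j < 8 - n) \<longrightarrow> G i j = 0"
    proof (intro allI impI)
      fix i j :: nat assume ij: "i < 8" "j < 8" and c: "i < 8 - n \<or> j < 8 - n"
      then have "i < k \<or> i = k \<or> j < k \<or> j = k" unfolding k2 by auto
      then show "G i j = 0"
      proof (elim disjE)
        assume "i < k" then show ?thesis unfolding G_def using z[of i j] ij w0 by simp
      next
        assume "i = k" then show ?thesis using S(3) ij by simp
      next
        assume "j < k" then show ?thesis unfolding G_def using z[of i j] ij w0 by simp
      next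
        assume "j = k" then show ?thesis using S(4) ij by simp
      qed
    qed
    have "n \<le> 8" using Suc.prems(1) by simp
    then have "\<exists>(m::nat) W. \<forall>i<8. \<forall>j<8. G i j = (\<Sum>l<m. W l i * cnj (W l j))"
      by (rule Suc.IH[OF _ S(1) S(2) zG])
    then obtain m :: nat and W where W: "\<forall>i<8. \<forall>j<8. G i j = (\<Sum>l<m. W l i * cnj (W l j))"
      by blast
    define W' where "W' = W(m := w)"
    have X: "\<forall>i<8. \<forall>j<8. F i j = (\<Sum>l<Suc m. W' l i * cnj (W' l j))"
    proof (intro allI impI)
      fix i j :: nat assume ij: "i < 8" "j < 8"
      have "(\<Sum>l<Suc m. W' l i * cnj (W' l j)) = (\<Sum>l<m. W l i * cnj (W l j)) + w i * cnj (w j)"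
        unfolding W'_def by simp
      also have "\<dots> = F i j" using W ij S(5)[of i j] by simp
      finally show "F i j = (\<Sum>l<Suc m. W' l i * cnj (W' l j))" ..
    qed
    show ?thesis by (rule exI[of _ "Suc m"], rule exI[of _ W'], rule X)
  next
    case False
    have "0 \<le> Re (F k k)" by (rule psd_diag[OF Suc.prems(3) k])
    then have re0: "Re (F k k) = 0" using False by simp
    have e: "F k k = complex_of_real (Re (F k k))" by (rule herm_diag[OF Suc.prems(2) k])
    have Fkk: "F k k = 0" using e unfolding re0 by simp
    have c0: "F j k = 0" if "j < 8" for j by (rule psd_offdiag0[OF Suc.prems(2,3) k that Fkk])
    have r0: "F k j = 0" if "j < 8" for j using hF[OF k that] c0[OF that] by simp
    have zF: "\<forall>i<8. \<forall>j<8. (i < 8 - n \<or> j < 8 - n) \<longrightarrow> F i j = 0"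
    proof (intro allI impI)
      fix i j :: nat assume ij: "i < 8" "j < 8" and c: "i < 8 - n \<or> j < 8 - n"
      then have "i < k \<or> i = k \<or> j < k \<or> j = k" unfolding k2 by auto
      then show "F i j = 0" using z[OF ij] c0 r0 ij by auto
    qed
    have "n \<le> 8" using Suc.prems(1) by simp
    then show ?thesis by (rule Suc.IH[OF _ Suc.prems(2,3) zF])
  qed
qed

lemma decomp_exists:
  assumes dens: "density_op 8 \<rho>"
  shows "\<exists>d. pure_decomp \<rho> d"
proof -
  define F where "F = (\<lambda>i j. \<rho> $$ (i,j))"
  have car: "\<rho> \<in> carrier_mat 8 8" using dens unfolding density_op_def by blast
  have hF: "hermF F" using dens unfolding density_op_def hermF_def F_def by blast
  have pF: "psdF F" unfolding psdF_def
  proof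
    fix v :: "nat \<Rightarrow> complex"
    have "vec 8 v \<in> carrier_vec 8" by simp
    then have "0 \<le> Re (\<Sum>i<8. \<Sum>j<8. cnj (vec 8 v $ i) * \<rho> $$ (i, j) * vec 8 v $ j)"
      using dens unfolding density_op_def by blast
    also have "(\<Sum>i<8. \<Sum>j<8. cnj (vec 8 v $ i) * \<rho> $$ (i, j) * vec 8 v $ j) = QF F v"
      unfolding QF_def F_def by (intro sum.cong refl) simp
    finally show "0 \<le> Re (QF F v)" .
  qed
  have "\<exists>(m::nat) W. \<forall>i<8. \<forall>j<8. F i j = (\<Sum>l<m. W l i * cnj (W l j))"
    by (rule gram[of 8 F]) (use hF pF in auto)
  then obtain m :: nat and W where W: "\<forall>i<8. \<forall>j<8. \<rho> $$ (i,j) = (\<Sum>l<m. W l i * cnj (W l j))"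
    unfolding F_def by blast
  define nr where "nr = (\<lambda>l. \<Sum>i<8. (cmod (W l i))^2)"
  define e0 where "e0 = vec 8 (\<lambda>i. if i = 0 then 1 else (0::complex))"
  define \<psi> where "\<psi> = (\<lambda>l. if nr l = 0 then e0 else vec 8 (\<lambda>i. W l i / complex_of_real (sqrt (nr l))))"
  define d where "d = map (\<lambda>l. (nr l, \<psi> l)) [0..<m]"
  have nr0: "0 \<le> nr l" for l unfolding nr_def by (simp add: sum_nonneg)
  have Wz: "W l i = 0" if "nr l = 0" "i < 8" for l i
  proof -
    have "(cmod (W l i))^2 = 0"
      using that sum_nonneg_eq_0_iff[of "{..<8::nat}" "\<lambda>i. (cmod (W l i))^2"] unfolding nr_def by simp
    then show ?thesis by simp
  qed
  have unit: "unit_vec8 (\<psi> l)" for l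
  proof (cases "nr l = 0")
    case True
    then show ?thesis unfolding unit_vec8_def \<psi>_def e0_def by (simp add: sum8)
  next
    case False
    then have pos: "nr l > 0" using nr0[of l] by simp
    have "(\<Sum>i<8. (cmod (W l i / complex_of_real (sqrt (nr l))))^2) = (\<Sum>i<8. (cmod (W l i))^2) / nr l"
      using pos by (simp add: norm_divide power_divide sum_divide_distrib)
    also have "\<dots> = 1" using pos unfolding nr_def by simp
    finally show ?thesis using False unfolding unit_vec8_def \<psi>_def by simp
  qed
  have trm: "complex_of_real (nr l) * proj (\<psi> l) $$ (i,j) = W l i * cnj (W l j)" if "i < 8" "j < 8" for l i j
  proof (cases "nr l = 0")
    case True
    then show ?thesis using Wz[OF True that(1)] by simp
  next
    case False
    then have pos: "nr l > 0" using nr0[of l] by simp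
    have s: "complex_of_real (sqrt (nr l)) * complex_of_real (sqrt (nr l)) = complex_of_real (nr l)"
    proof -
      have "sqrt (nr l) * sqrt (nr l) = nr l" using pos by simp
      then show ?thesis unfolding of_real_mult[symmetric] by simp
    qed
    have "proj (\<psi> l) $$ (i,j) = W l i * cnj (W l j) / (complex_of_real (sqrt (nr l)) * complex_of_real (sqrt (nr l)))"
      using False that unfolding \<psi>_def proj_def by simp
    then show ?thesis unfolding s using pos by (simp add: field_simps)
  qed
  have len: "length d = m" unfolding d_def by simp
  have dn: "d ! l = (nr l, \<psi> l)" if "l < m" for l unfolding d_def using that by simp
  have "pure_decomp \<rho> d" unfolding pure_decomp_def
  proof (intro conjI ballI allI impI)
    fix x assume "x \<in> set d"
    then obtain l where "x = (nr l, \<psi> l)" unfolding d_def by auto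
    then show "0 \<le> fst x" "unit_vec8 (snd x)" using nr0 unit by simp_all
  next
    have "(\<Sum>n<length d. fst (d ! n)) = (\<Sum>l<m. nr l)" unfolding len by (intro sum.cong refl) (simp add: dn)
    also have "\<dots> = (\<Sum>i<8. \<Sum>l<m. (cmod (W l i))^2)" unfolding nr_def by (rule sum.swap)
    also have "\<dots> = Re (mtrace \<rho>)"
    proof -
      have "complex_of_real (\<Sum>l<m. (cmod (W l i))^2) = \<rho> $$ (i,i)" if "i < 8" for i
        unfolding of_real_sum complex_norm_square using W that by simp
      then have "(\<Sum>i<8. \<Sum>l<m. (cmod (W l i))^2) = (\<Sum>i<8. Re (\<rho> $$ (i,i)))"
        by (intro sum.cong refl) (metis Re_complex_of_real lessThan_iff)
      also have "\<dots> = Re (mtrace \<rho>)" unfolding mtrace_def using car by (simp add: Re_sum)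
      finally show ?thesis .
    qed
    also have "\<dots> = 1" using dens unfolding density_op_def by simp
    finally show "(\<Sum>n<length d. fst (d ! n)) = 1" .
  next
    fix i j :: nat assume ij: "i < 8" "j < 8"
    have "\<rho> $$ (i,j) = (\<Sum>l<m. W l i * cnj (W l j))" using W ij by simp
    also have "\<dots> = (\<Sum>n<length d. complex_of_real (fst (d ! n)) * proj (snd (d ! n)) $$ (i, j))"
      unfolding len by (intro sum.cong refl) (simp add: dn trm[OF ij])
    finally show "\<rho> $$ (i,j) = (\<Sum>n<length d. complex_of_real (fst (d ! n)) * proj (snd (d ! n)) $$ (i, j))" .
  qed
  then show ?thesis by blast
qed

theorem theorem5:
  fixes \<rho> :: "complex mat"
  assumes "density_op 8 \<rho>"
  shows "S_max_total \<rho> + tangle \<rho> \<le> 3"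
proof -
  obtain d where d: "pure_decomp \<rho> d" using decomp_exists[OF assms] by blast
  define X where "X = {(\<Sum>n<length d. fst (d ! n) * tangle_pure (snd (d ! n))) | d. pure_decomp \<rho> d}"
  have mem: "dval d \<in> X" unfolding X_def dval_def using d by blast
  have bdd: "bdd_below X" unfolding bdd_below_def X_def
    by (rule exI[of _ 0]) (auto simp: mixed_bound(2)[unfolded dval_def])
  have "tangle \<rho> \<le> dval d" unfolding tangle_def X_def[symmetric] by (rule cInf_lower[OF mem bdd])
  then show ?thesis using mixed_bound(1)[OF d] by simp
qed

end
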